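(* For all positive integers $n$ and $k$, $$\sum_{r=1}^{k}(-1)^{k-r}\sum_{\substack{k_1+k_2+\cdots+k_r=k\\ k_i\geq 1}}\ \prod_{i=1}^{r}\binom{n}{k_i}=\binom{n+k-1}{k},$$ where the inner sum runs over all ordered $r$-tuples $(k_1,\dots,k_r)$ of positive integers with sum $k$ (i.e., over all compositions of $k$ into $r$ parts).
   Context: Binomial coefficients $\binom{m}{j}$ for nonnegative integers $m$ and $j$ are the usual ones, with $\binom{m}{j}=0$ when $j>m$. *)

theory Defs
  imports Main
begin

definition compositions :: "nat \<Rightarrow> nat \<Rightarrow> nat list set" where
  "compositions k r = {ks. length ks = r \<and> (\<forall>x\<in>set ks. x \<ge> 1) \<and> sum_list ks = k}"

end

theory Submission
  imports Defs "HOL-Computational_Algebra.Formal_Power_Series"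
begin

definition P :: "nat \<Rightarrow> nat list \<Rightarrow> int" where
  "P n ks = prod_list (map (\<lambda>j. int (n choose j)) ks)"

definition S :: "nat \<Rightarrow> nat \<Rightarrow> nat \<Rightarrow> int" where
  "S n k r = (\<Sum>ks\<in>compositions k r. P n ks)"

lemma prod_list_nth': "prod_list (map f ks) = (\<Prod>i<length ks. f (ks ! i))"
  by (induction ks) (simp_all add: prod.lessThan_Suc_shift del: prod.lessThan_Suc)

lemma comp_finite: "finite (compositions k r)"
proof (rule finite_subset)
  show "compositions k r \<subseteq> {xs. set xs \<subseteq> {0..k} \<and> length xs = r}"
    unfolding compositions_def
    using member_le_sum_list by fastforce
  show "finite {xs. set xs \<subseteq> {0..k::nat} \<and> length xs = r}"
    by (rule finite_lists_length_eq) simp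
qed

lemma comp_0_0: "compositions 0 0 = {[]}"
  unfolding compositions_def by auto

lemma comp_k_0: "k > 0 \<Longrightarrow> compositions k 0 = {}"
  unfolding compositions_def by auto

lemma len_le_sum: "(\<forall>x\<in>set ks. (x::nat) \<ge> 1) \<Longrightarrow> length ks \<le> sum_list ks"
  by (induction ks) auto

lemma comp_big: "r > k \<Longrightarrow> compositions k r = {}"
  unfolding compositions_def using len_le_sum by fastforce

lemma comp_Suc: "compositions k (Suc r) =
   (\<lambda>(j,ks). j # ks) ` (SIGMA j:{1..k}. compositions (k-j) r)"
proof (rule set_eqI, rule iffI)
  fix xs assume "xs \<in> compositions k (Suc r)"
  then obtain j ks where xs: "xs = j # ks" and "length ks = r" "j \<ge> 1"
    "\<forall>x\<in>set ks. x \<ge> 1" "j + sum_list ks = k"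
    unfolding compositions_def by (cases xs) auto
  then show "xs \<in> (\<lambda>(j,ks). j # ks) ` (SIGMA j:{1..k}. compositions (k-j) r)"
    unfolding compositions_def by (auto intro!: image_eqI[of _ _ "(j,ks)"])
next
  fix xs assume "xs \<in> (\<lambda>(j,ks). j # ks) ` (SIGMA j:{1..k}. compositions (k-j) r)"
  then show "xs \<in> compositions k (Suc r)"
    unfolding compositions_def by auto
qed

lemma S_Suc: "S n k (Suc r) = (\<Sum>j=1..k. int (n choose j) * S n (k-j) r)"
proof -
  have inj: "inj_on (\<lambda>(j,ks). j # ks) (SIGMA j:{1..k}. compositions (k-j) r)"
    by (auto simp: inj_on_def)
  have "S n k (Suc r) = (\<Sum>x\<in>(SIGMA j:{1..k}. compositions (k-j) r). P n ((\<lambda>(j,ks). j # ks) x))"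
    unfolding S_def comp_Suc by (rule sum.reindex[OF inj, unfolded comp_def])
  also have "\<dots> = (\<Sum>j=1..k. \<Sum>ks\<in>compositions (k-j) r. P n (j # ks))"
    using sum.Sigma[of "{1..k}" "\<lambda>j. compositions (k-j) r" "\<lambda>j ks. P n (j#ks)"]
    by (simp add: comp_finite split_def)
  also have "\<dots> = (\<Sum>j=1..k. int (n choose j) * S n (k-j) r)"
    by (simp add: S_def P_def sum_distrib_left)
  finally show ?thesis .
qed

lemma S_0_0: "S n 0 0 = 1" by (simp add: S_def comp_0_0 P_def)
lemma S_k_0: "k > 0 \<Longrightarrow> S n k 0 = 0" by (simp add: S_def comp_k_0)
lemma S_big: "r > k \<Longrightarrow> S n k r = 0" by (simp add: S_def comp_big)

definition g :: "nat \<Rightarrow> nat \<Rightarrow> int" where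
  "g n k = (\<Sum>r\<le>k. (-1)^r * S n k r)"

lemma g_ext: "m > k \<Longrightarrow> (\<Sum>r<m. (-1::int)^r * S n k r) = g n k"
  unfolding g_def
  by (rule sum.mono_neutral_right) (auto simp: S_big)

lemma g_rec: "k > 0 \<Longrightarrow> g n k = - (\<Sum>j=1..k. int (n choose j) * g n (k-j))"
proof -
  assume k: "k > 0"
  then obtain m where m: "k = Suc m" by (cases k) auto
  have "g n k = (\<Sum>r<Suc k. (-1)^r * S n k r)"
    unfolding g_def by (simp add: lessThan_Suc_atMost)
  also have "\<dots> = (\<Sum>r<k. (-1)^(Suc r) * S n k (Suc r))"
    by (subst sum.lessThan_Suc_shift) (simp add: S_k_0 k)
  also have "\<dots> = - (\<Sum>r<k. \<Sum>j=1..k. int (n choose j) * ((-1)^r * S n (k-j) r))"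
    by (simp add: S_Suc sum_distrib_left sum_negf algebra_simps)
  also have "\<dots> = - (\<Sum>j=1..k. int (n choose j) * (\<Sum>r<k. (-1)^r * S n (k-j) r))"
    by (subst sum.swap) (simp add: sum_distrib_left)
  also have "\<dots> = - (\<Sum>j=1..k. int (n choose j) * g n (k-j))"
    by (intro arg_cong[where f=uminus] sum.cong refl) (simp add: g_ext)
  finally show ?thesis .
qed

lemma g_closed: "real_of_int (g n k) = ((- real n) gchoose k)"
proof (induction k rule: less_induct)
  case (less k)
  show ?case
  proof (cases "k = 0")
    case True
    then show ?thesis by (simp add: g_def S_0_0)
  next
    case False
    have V: "(\<Sum>j=0..k. (real n gchoose j) * ((- real n) gchoose (k - j))) = 0"
      using gbinomial_Vandermonde[of "real n" "- real n" k] False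
      by (simp add: gbinomial_0_left)
    have "(\<Sum>j=0..k. (real n gchoose j) * ((- real n) gchoose (k - j)))
        = ((- real n) gchoose k) + (\<Sum>j=1..k. (real n gchoose j) * ((- real n) gchoose (k - j)))"
      by (simp add: sum.atLeast_Suc_atMost)
    also have "(\<Sum>j=1..k. (real n gchoose j) * ((- real n) gchoose (k - j)))
        = (\<Sum>j=1..k. real (n choose j) * real_of_int (g n (k - j)))"
      by (intro sum.cong refl) (simp add: less.IH False binomial_gbinomial)
    finally have "((- real n) gchoose k) = - (\<Sum>j=1..k. real (n choose j) * real_of_int (g n (k - j)))"
      using V by linarith
    moreover have "real_of_int (g n k) = - (\<Sum>j=1..k. real (n choose j) * real_of_int (g n (k - j)))"
      using g_rec[of k n] False by simp
    ultimately show ?thesis by simp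
  qed
qed

theorem theorem3:
  fixes n k :: nat
  assumes "n \<ge> 1" and "k \<ge> 1"
  shows "(\<Sum>r=1..k. (-1::int) ^ (k - r) *
            (\<Sum>ks\<in>compositions k r. \<Prod>i<r. int (n choose (ks ! i))))
         = int ((n + k - 1) choose k)"
proof -
  have inner: "(\<Sum>ks\<in>compositions k r. \<Prod>i<r. int (n choose (ks ! i))) = S n k r" for r
    unfolding S_def P_def
    by (intro sum.cong refl) (simp add: compositions_def prod_list_nth')
  have "(\<Sum>r=1..k. (-1::int) ^ (k - r) * S n k r) = (\<Sum>r=1..k. (-1)^k * ((-1)^r * S n k r))"
  proof (intro sum.cong refl)
    fix r assume "r \<in> {1..k}"
    then have "(-1::int)^k = (-1)^(k-r) * (-1)^r" by (simp add: power_add[symmetric])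
    then have "(-1::int)^k * (-1)^r = (-1)^(k-r) * ((-1)^r * (-1)^r)" by simp
    also have "(-1::int)^r * (-1)^r = 1" by (simp add: power_add[symmetric] flip: power_mult_distrib)
    finally show "(-1::int) ^ (k - r) * S n k r = (-1)^k * ((-1)^r * S n k r)" by simp
  qed
  also have "\<dots> = (-1)^k * g n k"
  proof -
    have "g n k = (\<Sum>r=0..k. (-1)^r * S n k r)" unfolding g_def by (simp add: atLeast0AtMost)
    also have "\<dots> = (\<Sum>r=1..k. (-1)^r * S n k r)"
      using assms by (simp add: sum.atLeast_Suc_atMost S_k_0)
    finally show ?thesis by (simp add: sum_distrib_left)
  qed
  finally have eq: "(\<Sum>r=1..k. (-1::int) ^ (k - r) * S n k r) = (-1)^k * g n k" .
  have "real_of_int ((-1)^k * g n k) = (-1)^k * ((- real n) gchoose k)"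
    by (simp add: g_closed)
  also have "\<dots> = real ((n + k - 1) choose k)"
    using assms by (simp add: gbinomial_minus binomial_gbinomial of_nat_diff flip: power_mult_distrib)
  finally have "(-1)^k * g n k = int ((n + k - 1) choose k)"
    by (metis of_int_eq_iff of_int_of_nat_eq)
  then show ?thesis using eq inner by simp
qed

end
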